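(* Let $(X,d)$ be a complete metric space with $|X|\geqslant 3$ and let $T\colon X\to X$ be continuous and asymptotically regular. Suppose there exist $\alpha\in[0,\frac12)$ and a function $F\colon[0,\infty)^3\to[0,\infty)$ with $F(0,0,0)=0$ and $F$ continuous at $(0,0,0)$, such that $$d(Tx,Ty)+d(Ty,Tz)+d(Tx,Tz)\leqslant \alpha\big(d(x,y)+d(y,z)+d(z,x)\big)+F\big(d(x,Tx),d(y,Ty),d(z,Tz)\big)$$ for all pairwise distinct $x,y,z\in X$. Then $T$ has a fixed point, and $T$ has at most two fixed points.
   Context: A mapping $T\colon X\to X$ on a metric space is asymptotically regular if $\lim_{n\to\infty}d(T^{n+1}x,T^nx)=0$ for every $x\in X$. *)

theory Defs
  imports "HOL-Analysis.Analysis"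
begin

definition asymptotically_regular :: "('a::metric_space \<Rightarrow> 'a) \<Rightarrow> bool" where
  "asymptotically_regular T \<longleftrightarrow>
     (\<forall>x. (\<lambda>n. dist ((T ^^ Suc n) x) ((T ^^ n) x)) \<longlonglongrightarrow> 0)"

end

theory Submission
  imports Defs
begin

theorem theorem4p5:
  fixes T :: "'a::complete_space \<Rightarrow> 'a"
    and F :: "real \<times> real \<times> real \<Rightarrow> real"
    and \<alpha> :: real
  assumes card3: "\<exists>a b c :: 'a. distinct [a, b, c]"
    and contT: "continuous_on UNIV T"
    and asreg: "asymptotically_regular T"
    and alpha: "0 \<le> \<alpha>" "\<alpha> < 1/2"
    and F_nonneg: "\<And>u v w. 0 \<le> u \<Longrightarrow> 0 \<le> v \<Longrightarrow> 0 \<le> w \<Longrightarrow> 0 \<le> F (u, v, w)"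
    and F_zero: "F (0, 0, 0) = 0"
    and F_cont: "continuous (at (0, 0, 0) within {p. 0 \<le> fst p \<and> 0 \<le> fst (snd p) \<and> 0 \<le> snd (snd p)}) F"
    and contr: "\<And>x y z. distinct [x, y, z] \<Longrightarrow>
        dist (T x) (T y) + dist (T y) (T z) + dist (T x) (T z)
          \<le> \<alpha> * (dist x y + dist y z + dist z x) + F (dist x (T x), dist y (T y), dist z (T z))"
  shows "(\<exists>x. T x = x) \<and> (\<forall>x y z. T x = x \<and> T y = y \<and> T z = z \<longrightarrow> \<not> distinct [x, y, z])"
proof
  show "\<forall>x y z. T x = x \<and> T y = y \<and> T z = z \<longrightarrow> \<not> distinct [x, y, z]"
  proof (intro allI impI notI)
    fix x y z assume fx: "T x = x \<and> T y = y \<and> T z = z" and dxyz: "distinct [x, y, z]"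
    have "dist x y + dist y z + dist x z \<le> \<alpha> * (dist x y + dist y z + dist z x)"
      using contr[OF dxyz] fx F_zero by simp
    moreover have "dist x y > 0" using dxyz by simp
    moreover have "dist y z \<ge> 0" "dist x z \<ge> 0" by simp_all
    ultimately have "(1 - \<alpha>) * (dist x y + dist y z + dist x z) \<le> 0"
      by (simp add: dist_commute algebra_simps)
    moreover have "(1 - \<alpha>) * (dist x y + dist y z + dist x z) > 0"
    proof (rule mult_pos_pos)
      show "0 < 1 - \<alpha>" using alpha by simp
      show "0 < dist x y + dist y z + dist x z"
        using \<open>dist x y > 0\<close> \<open>dist y z \<ge> 0\<close> \<open>dist x z \<ge> 0\<close> by linarith
    qed
    ultimately show False by simp
  qed
next
  show "\<exists>x. T x = x"
  proof (rule ccontr)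
    assume nofix: "\<nexists>x. T x = x"
    obtain x0 :: 'a where True by simp
    define x where "x n = (T ^^ n) x0" for n
    define d where "d k = dist (x k) (x (Suc k))" for k
    have xS: "T (x n) = x (Suc n)" for n by (simp add: x_def)
    have dnn: "d k \<ge> 0" for k by (simp add: d_def)
    have key: "(1 - 2*\<alpha>) * dist (x n) (x m) \<le> (1 + 2*\<alpha>) * d n + d m + F (d n, d m, d (Suc n))"
      for n m
    proof -
      have Fnn: "F (d n, d m, d (Suc n)) \<ge> 0" using F_nonneg dnn by blast
      have neq: "x n \<noteq> x (Suc n)" using nofix xS by metis
      show ?thesis
      proof (cases "x m = x n")
        case True then show ?thesis using Fnn dnn[of n] dnn[of m] alpha by simp
      next
        case False
        show ?thesis
        proof (cases "x m = x (Suc n)")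
          case True
          then have "dist (x n) (x m) = d n" by (simp add: d_def)
          moreover have "0 \<le> \<alpha> * d n" using alpha dnn[of n] by simp
          ultimately show ?thesis using Fnn dnn[of n] dnn[of m]
            by (simp add: algebra_simps)
        next
          case False2: False
          have dd: "distinct [x n, x m, x (Suc n)]" using False False2 neq by auto
          have c: "dist (x (Suc n)) (x (Suc m)) + dist (x (Suc m)) (x (Suc (Suc n))) + dist (x (Suc n)) (x (Suc (Suc n)))
            \<le> \<alpha> * (dist (x n) (x m) + dist (x m) (x (Suc n)) + dist (x (Suc n)) (x n)) + F (d n, d m, d (Suc n))"
            using contr[OF dd] by (simp add: xS d_def)
          have t1: "dist (x m) (x (Suc n)) \<le> dist (x n) (x m) + d n"
            unfolding d_def using dist_triangle[of "x m" "x (Suc n)" "x n"] by (simp add: dist_commute)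
          have t2: "dist (x n) (x m) \<le> d n + dist (x (Suc n)) (x (Suc m)) + d m"
          proof -
            have "dist (x n) (x m) \<le> dist (x n) (x (Suc n)) + dist (x (Suc n)) (x m)" by (rule dist_triangle)
            moreover have "dist (x (Suc n)) (x m) \<le> dist (x (Suc n)) (x (Suc m)) + dist (x (Suc m)) (x m)" by (rule dist_triangle)
            ultimately show ?thesis unfolding d_def by (simp add: dist_commute)
          qed
          have t3: "dist (x (Suc n)) (x n) = d n" by (simp add: d_def dist_commute)
          have "\<alpha> * (dist (x n) (x m) + dist (x m) (x (Suc n)) + dist (x (Suc n)) (x n))
              \<le> \<alpha> * (2 * dist (x n) (x m) + 2 * d n)"
            using t1 t3 alpha by (intro mult_left_mono) auto
          moreover have "dist (x (Suc m)) (x (Suc (Suc n))) \<ge> 0" "dist (x (Suc n)) (x (Suc (Suc n))) \<ge> 0" by simp_all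
          moreover have "\<alpha> * (2 * dist (x n) (x m) + 2 * d n) = 2 * (\<alpha> * dist (x n) (x m)) + 2 * (\<alpha> * d n)"
            "(1 - 2*\<alpha>) * dist (x n) (x m) = dist (x n) (x m) - 2 * (\<alpha> * dist (x n) (x m))"
            "(1 + 2*\<alpha>) * d n = d n + 2 * (\<alpha> * d n)"
            by (simp_all add: algebra_simps)
          ultimately show ?thesis using c t2 by linarith
        qed
      qed
    qed
    have dlim: "d \<longlonglongrightarrow> 0"
      using asreg unfolding asymptotically_regular_def d_def x_def
      by (simp add: dist_commute)
    have "Cauchy x"
    proof (rule metric_CauchyI)
      fix e :: real assume e: "0 < e"
      define \<eta> where "\<eta> = (1 - 2*\<alpha>) * e / 2"
      have eta: "\<eta> > 0" using e alpha by (simp add: \<eta>_def)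
      obtain \<delta> where dp: "\<delta> > 0" and dF: "\<And>p. p \<in> {p. 0 \<le> fst p \<and> 0 \<le> fst (snd p) \<and> 0 \<le> snd (snd p)}
          \<Longrightarrow> dist p (0,0,0) < \<delta> \<Longrightarrow> dist (F p) (F (0,0,0)) < \<eta>"
        using F_cont eta unfolding continuous_within_eps_delta by blast
      define c where "c = min (\<delta>/3) (\<eta>/3)"
      have cp: "c > 0" using dp eta by (simp add: c_def)
      obtain N where N: "\<And>n. n \<ge> N \<Longrightarrow> norm (d n - 0) < c"
        using dlim cp unfolding LIMSEQ_iff by blast
      have dc: "n \<ge> N \<Longrightarrow> d n < c" for n using N[of n] dnn[of n] by simp
      show "\<exists>M. \<forall>m\<ge>M. \<forall>n\<ge>M. dist (x m) (x n) < e"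
      proof (intro exI allI impI)
        fix m n assume m: "m \<ge> N" and n: "n \<ge> N"
        have dm: "d m < c" "d n < c" "d (Suc n) < c" using dc m n by auto
        have "dist (d n, d m, d (Suc n)) (0,0,0) = norm (d n, d m, d (Suc n))"
          by (simp add: dist_norm)
        also have "\<dots> \<le> norm (d n) + norm (d m, d (Suc n))" by (rule norm_Pair_le)
        also have "\<dots> \<le> norm (d n) + (norm (d m) + norm (d (Suc n)))"
          using norm_Pair_le by (metis add_left_mono)
        also have "\<dots> = d n + d m + d (Suc n)" using dnn by simp
        finally have "dist (d n, d m, d (Suc n)) (0,0,0) < \<delta>" using dm c_def by linarith
        then have "dist (F (d n, d m, d (Suc n))) (F (0,0,0)) < \<eta>"
          using dF dnn by auto
        then have Fl: "F (d n, d m, d (Suc n)) < \<eta>" using F_zero by (simp add: dist_real_def)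
        have "(1 + 2*\<alpha>) * d n \<le> 2 * d n" using alpha dnn[of n] by (intro mult_right_mono) auto
        then have "(1 - 2*\<alpha>) * dist (x n) (x m) < 2 * \<eta>"
          using key[of n m] Fl dm c_def by linarith
        then have "(1 - 2*\<alpha>) * dist (x n) (x m) < (1 - 2*\<alpha>) * e" by (simp add: \<eta>_def)
        then show "dist (x m) (x n) < e" using alpha by (simp add: dist_commute)
      qed
    qed
    then obtain L where L: "x \<longlonglongrightarrow> L" using Cauchy_convergent_iff convergent_def by blast
    have "(\<lambda>n. T (x n)) \<longlonglongrightarrow> T L"
      using isCont_tendsto_compose[OF _ L] contT by (auto simp add: continuous_on_eq_continuous_at)
    moreover have "(\<lambda>n. T (x n)) \<longlonglongrightarrow> L" using L xS by (simp add: LIMSEQ_Suc)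
    ultimately have "T L = L" using LIMSEQ_unique by blast
    then show False using nofix by blast
  qed
qed

end
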